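(* Let $q$ be a prime power, $n\ge1$ and $L\ge 2$ integers, and $r\in[0,\frac{L}{L+1})$ with $rn\in\mathbb{N}$, such that $n-\lceil\frac{L+1}{L}rn\rceil+1>(L-1)\frac{q}{q-1}$. Then no linear code $C\subseteq\mathbb{F}_q^n$ of dimension $n-\lceil\frac{L+1}{L}rn\rceil+1$ is $(r,L)$ list-decodable.
   Context: A linear $[n,k]_q$ code is a $k$-dimensional subspace of $\mathbb{F}_q^n$. $B_t(v)$ is the Hamming ball of radius $t$ around $v$ (Hamming distance = number of differing coordinates). A code $C\subseteq\mathbb{F}_q^n$ is $(r,L)$ list-decodable if $|B_{rn}(v)\cap C|\le L$ for every $v\in\mathbb{F}_q^n$. *)

theory Defs
  imports "HOL-Analysis.Analysis"
begin

text \<open>Vectors of F_q^n are modelled as elements of 'a ^ 'n with n = CARD('n),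
  where 'a is a finite field (so q = CARD('a) is automatically a prime power).\<close>

definition hamming_dist :: "'a ^ 'n \<Rightarrow> 'a ^ 'n \<Rightarrow> nat" where
  "hamming_dist x y = card {i. x $ i \<noteq> y $ i}"

definition hamming_ball :: "'a ^ 'n \<Rightarrow> real \<Rightarrow> ('a ^ 'n) set" where
  "hamming_ball v t = {y. real (hamming_dist v y) \<le> t}"

definition list_decodable :: "real \<Rightarrow> nat \<Rightarrow> ('a ^ 'n::finite) set \<Rightarrow> bool" where
  "list_decodable r L C \<longleftrightarrow>
     (\<forall>v. card (hamming_ball v (r * real CARD('n)) \<inter> C) \<le> L)"

end

theory Submission
  imports Defs
begin

lemma blocks_exist:
  assumes "finite X" "m * u \<le> card X"
  shows "\<exists>B. (\<forall>i<m. B i \<subseteq> X \<and> card (B i) = u) \<and>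
             (\<forall>i<m. \<forall>l<m. i \<noteq> l \<longrightarrow> B i \<inter> B l = {})"
  using assms
proof (induction m arbitrary: X)
  case 0
  then show ?case by auto
next
  case (Suc m)
  then have "u \<le> card X" by simp
  then obtain B0 where B0: "B0 \<subseteq> X" "card B0 = u" "finite B0"
    by (rule obtain_subset_with_card_n)
  have "card (X - B0) = card X - u" using B0 Suc.prems by (simp add: card_Diff_subset)
  then have mu: "m * u \<le> card (X - B0)" using Suc.prems(2) by simp
  have fX: "finite (X - B0)" using Suc.prems(1) by simp
  obtain B' where B': "\<forall>i<m. B' i \<subseteq> X - B0 \<and> card (B' i) = u"
    "\<forall>i<m. \<forall>l<m. i \<noteq> l \<longrightarrow> B' i \<inter> B' l = {}"
    using Suc.IH[OF fX mu] by blast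
  define B where "B i = (if i = m then B0 else B' i)" for i
  have P1: "\<forall>i<Suc m. B i \<subseteq> X \<and> card (B i) = u"
  proof (intro allI impI)
    fix i assume "i < Suc m"
    then consider "i = m" | "i < m" by linarith
    then show "B i \<subseteq> X \<and> card (B i) = u"
    proof cases
      case 1 then show ?thesis using B0 by (simp add: B_def)
    next
      case 2 then show ?thesis using B'(1) by (auto simp: B_def)
    qed
  qed
  have P2: "\<forall>i<Suc m. \<forall>l<Suc m. i \<noteq> l \<longrightarrow> B i \<inter> B l = {}"
  proof (intro allI impI)
    fix i l assume il: "i < Suc m" "l < Suc m" "i \<noteq> l"
    show "B i \<inter> B l = {}"
    proof (cases "i = m")
      case True
      then have l: "l < m" "l \<noteq> m" using il by linarith+
      have e: "B i = B0" "B l = B' l" using True l(2) unfolding B_def by simp_all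
      have "B' l \<subseteq> X - B0" using B'(1) l(1) by blast
      then show ?thesis unfolding e by blast
    next
      case False
      then have i: "i < m" using il by linarith
      show ?thesis
      proof (cases "l = m")
        case True
        have e: "B i = B' i" "B l = B0" using True False unfolding B_def by simp_all
        have "B' i \<subseteq> X - B0" using B'(1) i by blast
        then show ?thesis unfolding e by blast
      next
        case False2: False
        then have l: "l < m" using il by linarith
        have e: "B i = B' i" "B l = B' l" using False False2 unfolding B_def by simp_all
        show ?thesis unfolding e using B'(2) i l il(3) by blast
      qed
    qed
  qed
  from P1 P2 show ?case by blast
qed

lemma arith_aux:
  fixes L K t :: nat
  assumes "L * (K + 1) + 1 \<le> (L + 1) * t"
  shows "K + 1 \<le> t + K div (L + 1)"
proof (rule ccontr)
  assume c: "\<not> ?thesis"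
  define u where "u = K div (L + 1)"
  define w where "w = K mod (L + 1)"
  have K: "K = (L + 1) * u + w" unfolding u_def w_def
    by (metis div_mult_mod_eq mult.commute)
  have w: "w \<le> L" unfolding w_def
    using less_Suc_eq_le mod_less_divisor by fastforce
  have "t \<le> L * u + w" using c K unfolding u_def[symmetric] by (simp add: algebra_simps)
  then have "(L + 1) * t \<le> (L + 1) * (L * u + w)" by (rule mult_le_mono2)
  with assms K have "L * ((L + 1) * u + w + 1) + 1 \<le> (L + 1) * (L * u + w)" by simp
  then have "L + 1 \<le> w" by (simp add: algebra_simps)
  with w show False by simp
qed

theorem lemma3p5:
  fixes C :: "(('a::{finite,field}) ^ 'n) set"
    and r :: real and L :: nat
  defines "n \<equiv> CARD('n)" and "q \<equiv> CARD('a)"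
  assumes "L \<ge> 2"
    and "0 \<le> r" and "r < real L / (real L + 1)"
    and "\<exists>m::nat. r * real n = real m"
    and "real_of_int (int n - \<lceil>(real L + 1) / real L * r * real n\<rceil> + 1)
           > (real L - 1) * real q / (real q - 1)"
    and "vec.subspace C"
    and "int (vec.dim C) = int n - \<lceil>(real L + 1) / real L * r * real n\<rceil> + 1"
  shows "\<not> list_decodable r L C"
proof -
  note n_def = assms(1) and q_def = assms(2)
  have L2: "L \<ge> 2" using assms(3) .
  have sub: "vec.subspace C" using assms(8) .
  obtain t :: nat where t: "r * real n = real t" using assms(6) by blast
  define k where "k = vec.dim C"
  define s where "s = \<lceil>(real L + 1) / real L * r * real n\<rceil>"
  have ks: "int k = int n - s + 1" using assms(9) unfolding k_def s_def .
  have kq: "real k > (real L - 1) * real q / (real q - 1)"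
  proof -
    have "real k = real_of_int (int k)" by simp
    also have "\<dots> = real_of_int (int n - s + 1)" using ks by simp
    finally show ?thesis using assms(7) unfolding s_def by simp
  qed
  define good where "good I \<longleftrightarrow> (\<forall>c\<in>C. (\<forall>i\<in>I. c$i = 0) \<longrightarrow> c = 0)" for I :: "'n set"
  have "good UNIV" by (auto simp: good_def vec_eq_iff)
  then obtain I where I: "good I" and Imin: "\<forall>I'. good I' \<longrightarrow> card I \<le> card I'"
    using ex_has_least_nat[of good UNIV card] by blast
  have cp_ex: "\<forall>p\<in>I. \<exists>c\<in>C. c$p = 1 \<and> (\<forall>i\<in>I-{p}. c$i = 0)"
  proof
    fix p assume p: "p \<in> I"
    have "card (I - {p}) < card I" using p by (intro card_Diff1_less) auto
    hence "\<not> good (I-{p})" using Imin by (meson leD)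
    then obtain c where c: "c\<in>C" "\<forall>i\<in>I-{p}. c$i=0" "c \<noteq> 0" unfolding good_def by blast
    have cp0: "c$p \<noteq> 0"
    proof
      assume "c$p = 0"
      then have "\<forall>i\<in>I. c$i = 0" using c(2) by blast
      then show False using I c unfolding good_def by blast
    qed
    have dC: "inverse (c$p) *s c \<in> C" by (rule vec.subspace_scale[OF sub c(1)])
    have "(inverse (c$p) *s c) $ p = 1 \<and> (\<forall>i\<in>I-{p}. (inverse (c$p) *s c) $ i = 0)"
      using c(2) cp0 by simp
    with dC show "\<exists>c\<in>C. c$p = 1 \<and> (\<forall>i\<in>I-{p}. c$i = 0)" by blast
  qed
  obtain cp where cp0: "\<forall>p\<in>I. cp p \<in> C \<and> cp p $ p = 1 \<and> (\<forall>i\<in>I-{p}. cp p $ i = 0)"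
  proof -
    have "\<forall>p\<in>I. \<exists>c. c \<in> C \<and> c$p = 1 \<and> (\<forall>i\<in>I-{p}. c$i = 0)" using cp_ex by blast
    from bchoice[OF this] show ?thesis using that by blast
  qed
  then have cp: "\<And>p. p\<in>I \<Longrightarrow> cp p \<in> C \<and> cp p $ p = 1 \<and> (\<forall>i\<in>I-{p}. cp p $ i = 0)"
    by blast
  have spanC: "C \<subseteq> vec.span (cp ` I)"
  proof
    fix c assume cC: "c \<in> C"
    define d where "d = (\<Sum>p\<in>I. (c$p) *s cp p)"
    have dC: "d \<in> C" unfolding d_def
      by (rule vec.subspace_sum[OF sub], rule vec.subspace_scale[OF sub]) (use cp in blast)
    have dI: "d$i = c$i" if i: "i \<in> I" for i
    proof -
      have "d$i = (\<Sum>p\<in>I. c$p * cp p $ i)" unfolding d_def by (simp add: sum_component)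
      also have "\<dots> = (\<Sum>p\<in>I. if p = i then c$i else 0)"
        by (rule sum.cong) (use cp i in auto)
      also have "\<dots> = c$i" using i by simp
      finally show ?thesis .
    qed
    have "c - d \<in> C" using cC dC sub by (simp add: vec.subspace_diff)
    moreover have "\<forall>i\<in>I. (c - d)$i = 0" using dI by simp
    ultimately have "c - d = 0" using I unfolding good_def by blast
    then have "c = d" by simp
    moreover have "d \<in> vec.span (cp ` I)" unfolding d_def
      by (intro vec.span_sum vec.span_scale vec.span_base) auto
    ultimately show "c \<in> vec.span (cp ` I)" by simp
  qed
  have kI: "k \<le> card I"
  proof -
    have "k \<le> card (cp ` I)" unfolding k_def by (rule vec.dim_le_card[OF spanC]) simp
    also have "\<dots> \<le> card I" by (rule card_image_le) simp
    finally show ?thesis .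
  qed
  have In: "card I \<le> n" unfolding n_def by (simp add: card_mono)
  have L1: "L \<ge> 1" using L2 by simp
  have q2: "q \<ge> 2"
  proof -
    have "card {0::'a, 1} \<le> card (UNIV::'a set)" by (rule card_mono) auto
    then show ?thesis unfolding q_def by simp
  qed
  define J where "J = UNIV - I"
  have cardJ: "card J = n - card I" unfolding J_def n_def by (simp add: card_Diff_subset)
  have rn: "(real L + 1) / real L * r * real n = (real L + 1) / real L * real t"
    using t by (simp add: mult.assoc)
  have sreal: "real_of_int s < (real L + 1) / real L * real t + 1"
    using ceiling_correct[of "(real L + 1) / real L * real t"] unfolding s_def rn by linarith
  have "real L * real_of_int s < real L * ((real L + 1) / real L * real t + 1)"
    using sreal L1 by (intro mult_strict_left_mono) auto
  also have "\<dots> = (real L + 1) * real t + real L" using L1 by (simp add: field_simps)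
  finally have "real_of_int (int L * s) < real_of_int ((int L + 1) * int t + int L)" by simp
  then have Ls: "int L * s < (int L + 1) * int t + int L" by (simp only: of_int_less_iff)
  have kn: "k \<le> n" using kI In by simp
  have s1: "s \<ge> 1" using ks kn by simp
  obtain j :: 'n where hj: "J \<noteq> {} \<Longrightarrow> j \<in> J" by blast
  define X where "X = J - {j}"
  define K where "K = card X"
  have KL: "L * (K + 1) + 1 \<le> (L + 1) * t"
  proof (cases "J = {}")
    case False
    then have "j \<in> J" using hj by blast
    then have "K + 1 = card J" unfolding K_def X_def
      by (metis One_nat_def Suc_pred card_Diff_singleton card_gt_0_iff finite empty_iff add.commute plus_1_eq_Suc)
    then have "int (K + 1) \<le> s - 1" using cardJ ks kI In by linarith
    then have "int L * int (K + 1) \<le> int L * (s - 1)" by (rule mult_left_mono) simp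
    then have "int L * int (K + 1) + 1 \<le> (int L + 1) * int t"
      using Ls by (simp add: algebra_simps)
    moreover have "int (L * (K + 1) + 1) = int L * int (K + 1) + 1" by (simp only: of_nat_add of_nat_mult of_nat_1)
    moreover have "int ((L + 1) * t) = (int L + 1) * int t" by (simp only: of_nat_add of_nat_mult of_nat_1)
    ultimately have "int (L * (K + 1) + 1) \<le> int ((L + 1) * t)" by linarith
    then show ?thesis by (simp only: of_nat_le_iff)
  next
    case True
    then have K0: "K = 0" unfolding K_def X_def by simp
    have "int L * 1 \<le> int L * s" using s1 by (intro mult_left_mono) auto
    then have "(int L + 1) * int t > 0" using Ls by linarith
    then have "t \<ge> 1" by (cases t) auto
    then have "(L + 1) * 1 \<le> (L + 1) * t" by (rule mult_le_mono2)
    then show ?thesis using K0 by simp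
  qed
  define u where "u = K div (L + 1)"
  have Kt: "K + 1 \<le> t + u" unfolding u_def by (rule arith_aux[OF KL])
  have uK: "u \<le> K" unfolding u_def by (rule div_le_dividend)
  have fX: "finite X" by simp
  have Lu: "Suc L * u \<le> card X"
    using div_times_less_eq_dividend[of K "L + 1"] unfolding u_def K_def by (simp add: mult.commute)
  obtain B where Bsub: "\<forall>i<Suc L. B i \<subseteq> X \<and> card (B i) = u"
    and Bdis: "\<forall>i<Suc L. \<forall>l<Suc L. i \<noteq> l \<longrightarrow> B i \<inter> B l = {}"
    using blocks_exist[OF fX Lu] by blast
  define S where "S = (UNIV - {0::'a}) \<times> I"
  define f where "f x = fst x * cp (snd x) $ j" for x :: "'a \<times> 'n"
  have cardS: "card S = (q - 1) * card I"
    unfolding S_def q_def by (simp add: card_cartesian_product card_Diff_subset)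
  have big: "(L - 1) * q < (q - 1) * card I"
  proof -
    have "(real L - 1) * real q < real k * (real q - 1)"
      using kq q2 by (simp add: pos_divide_less_eq)
    also have "\<dots> \<le> real (card I) * (real q - 1)"
      using kI q2 by (intro mult_right_mono) auto
    finally have "real ((L - 1) * q) < real ((q - 1) * card I)"
      using L1 q2 by (simp add: of_nat_diff mult.commute)
    then show ?thesis by (simp only: of_nat_less_iff)
  qed
  have "\<exists>\<beta>. L \<le> card {x\<in>S. f x = \<beta>}"
  proof (rule ccontr)
    assume nex: "\<not> ?thesis"
    have lt: "card {x\<in>S. f x = \<beta>} \<le> L - 1" for \<beta>
    proof -
      have "\<not> L \<le> card {x\<in>S. f x = \<beta>}" using nex by blast
      then show ?thesis by linarith
    qed
    have "S = (\<Union>\<beta>\<in>UNIV. {x\<in>S. f x = \<beta>})" by auto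
    then have "card S \<le> (\<Sum>\<beta>\<in>UNIV. card {x\<in>S. f x = \<beta>})"
      by (metis card_UN_le finite)
    also have "\<dots> \<le> (\<Sum>\<beta>\<in>(UNIV::'a set). L - 1)" by (rule sum_mono) (rule lt)
    also have "\<dots> = q * (L - 1)" unfolding q_def by simp
    finally show False using big cardS by (simp add: mult.commute)
  qed
  then obtain \<beta> where "L \<le> card {x\<in>S. f x = \<beta>}" by blast
  then obtain T where T: "T \<subseteq> {x\<in>S. f x = \<beta>}" "card T = L" "finite T"
    by (rule obtain_subset_with_card_n)
  obtain e where e: "bij_betw e {0..<L} T"
    using ex_bij_betw_nat_finite[OF T(3)] T(2) by auto
  have eS: "fst (e i) \<noteq> 0 \<and> snd (e i) \<in> I \<and> fst (e i) * cp (snd (e i)) $ j = \<beta>" if "i < L" for i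
  proof -
    have "e i \<in> T" using e that by (auto dest: bij_betw_apply)
    then show ?thesis using T(1) unfolding S_def f_def by (auto simp: mem_Times_iff)
  qed
  have einj: "inj_on e {0..<L}" using e by (rule bij_betw_imp_inj_on)
  define cw where "cw i = fst (e i) *s cp (snd (e i))" for i
  have cwC: "cw i \<in> C" if "i < L" for i
    unfolding cw_def using eS[OF that] cp sub by (simp add: vec.subspace_scale)
  have cwj: "cw i $ j = \<beta>" if "i < L" for i
    unfolding cw_def using eS[OF that] by simp
  have cwp: "cw i $ snd (e i) = fst (e i)" if "i < L" for i
    unfolding cw_def using eS[OF that] cp by simp
  have cwz: "cw i $ x = 0" if "i < L" "x \<in> I" "x \<noteq> snd (e i)" for i x
    unfolding cw_def using eS[OF that(1)] cp that by simp
  have cw_inj: "i = i'" if "i < L" "i' < L" "cw i = cw i'" for i i'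
  proof -
    have pp: "snd (e i) = snd (e i')"
    proof (rule ccontr)
      assume "snd (e i) \<noteq> snd (e i')"
      then have "cw i' $ snd (e i) = 0" using cwz[OF that(2)] eS[OF that(1)] by simp
      then show False using cwp[OF that(1)] eS[OF that(1)] that(3) by simp
    qed
    have "fst (e i) = fst (e i')" using cwp[OF that(1)] cwp[OF that(2)] that(3) pp by simp
    then have "e i = e i'" using pp by (simp add: prod_eq_iff)
    then show ?thesis using einj that by (auto dest: inj_onD)
  qed
  have cw_nz: "cw i \<noteq> 0" if "i < L" for i
    using cwp[OF that] eS[OF that] by (metis zero_index)
  define v where "v = (\<chi> x. if x = j then \<beta> else if (\<exists>i<L. x \<in> B i)
                            then cw (SOME i. i < L \<and> x \<in> B i) $ x else 0)"
  have rt: "r * real CARD('n) = real t" using t unfolding n_def .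
  have D1: "hamming_dist v (cw i) \<le> t" if i: "i < L" for i
  proof -
    have "{x. v$x \<noteq> cw i $ x} \<subseteq> insert (snd (e i)) (X - B i)"
    proof
      fix x assume x: "x \<in> {x. v$x \<noteq> cw i $ x}"
      show "x \<in> insert (snd (e i)) (X - B i)"
      proof (cases "x = j")
        case True
        then show ?thesis using x cwj[OF i] unfolding v_def by simp
      next
        case xj: False
        show ?thesis
        proof (cases "x \<in> B i")
          case True
          then have ex: "\<exists>l<L. x \<in> B l" using i by blast
          define l where "l = (SOME l. l < L \<and> x \<in> B l)"
          have l: "l < L \<and> x \<in> B l" unfolding l_def by (rule someI_ex[OF ex])
          have "l = i"
          proof (rule ccontr)
            assume "l \<noteq> i"
            then have "B l \<inter> B i = {}" using Bdis l i by simp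
            then show False using l True by blast
          qed
          then have "v$x = cw i $ x" using xj ex unfolding v_def l_def by simp
          then show ?thesis using x by simp
        next
          case xB: False
          show ?thesis
          proof (cases "x \<in> X")
            case True then show ?thesis using xB by simp
          next
            case False
            then have xI: "x \<in> I" using xj unfolding X_def J_def by blast
            have nB: "\<not> (\<exists>l<L. x \<in> B l)"
            proof
              assume "\<exists>l<L. x \<in> B l"
              then obtain l where l: "l < L" "x \<in> B l" by blast
              then have "B l \<subseteq> X" using Bsub by simp
              then show False using l False by blast
            qed
            have "v$x = (if x = j then \<beta> else if (\<exists>i<L. x \<in> B i)
                            then cw (SOME i. i < L \<and> x \<in> B i) $ x else 0)"
              unfolding v_def by (rule vec_lambda_beta)
            then have "v$x = 0" by (simp only: xj nB if_False)
            then have "cw i $ x \<noteq> 0" using x by simp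
            then have "x = snd (e i)" using cwz[OF i xI] by blast
            then show ?thesis by simp
          qed
        qed
      qed
    qed
    then have "card {x. v$x \<noteq> cw i $ x} \<le> card (insert (snd (e i)) (X - B i))"
      by (rule card_mono[rotated]) simp
    also have "\<dots> \<le> Suc (card (X - B i))" by (rule card_insert_le_m1) auto
    also have "card (X - B i) = K - u" using Bsub i unfolding K_def by (simp add: card_Diff_subset)
    finally show ?thesis unfolding hamming_dist_def using Kt uK by linarith
  qed
  have D0: "hamming_dist v 0 \<le> t"
  proof -
    have "{x. v$x \<noteq> (0::'a^'n) $ x} \<subseteq> insert j (X - B L)"
    proof
      fix x assume x: "x \<in> {x. v$x \<noteq> (0::'a^'n) $ x}"
      show "x \<in> insert j (X - B L)"
      proof (cases "x = j")
        case True then show ?thesis by simp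
      next
        case xj: False
        have ex: "\<exists>l<L. x \<in> B l"
        proof (rule ccontr)
          assume nB: "\<not> (\<exists>l<L. x \<in> B l)"
          have "v$x = (if x = j then \<beta> else if (\<exists>i<L. x \<in> B i)
                            then cw (SOME i. i < L \<and> x \<in> B i) $ x else 0)"
            unfolding v_def by (rule vec_lambda_beta)
          then have "v$x = 0" by (simp only: xj nB if_False)
          then show False using x by simp
        qed
        then obtain l where l: "l < L" "x \<in> B l" by blast
        have "B l \<inter> B L = {}" using Bdis l by simp
        moreover have "B l \<subseteq> X" using Bsub l by simp
        ultimately show ?thesis using l by blast
      qed
    qed
    then have "card {x. v$x \<noteq> (0::'a^'n) $ x} \<le> card (insert j (X - B L))"
      by (rule card_mono[rotated]) simp
    also have "\<dots> \<le> Suc (card (X - B L))" by (rule card_insert_le_m1) auto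
    also have "card (X - B L) = K - u" using Bsub unfolding K_def by (simp add: card_Diff_subset)
    finally show ?thesis unfolding hamming_dist_def using Kt uK by linarith
  qed
  define W where "W = insert 0 (cw ` {..<L})"
  have Wsub: "W \<subseteq> hamming_ball v (r * real CARD('n)) \<inter> C"
    unfolding W_def hamming_ball_def rt using D0 D1 cwC vec.subspace_0[OF sub] by auto
  have "inj_on cw {..<L}" by (rule inj_onI) (use cw_inj in auto)
  then have "card (cw ` {..<L}) = L" by (simp add: card_image)
  moreover have "0 \<notin> cw ` {..<L}" using cw_nz by auto
  ultimately have "card W = Suc L" unfolding W_def by simp
  moreover have "card W \<le> card (hamming_ball v (r * real CARD('n)) \<inter> C)"
    by (rule card_mono[OF _ Wsub]) simp
  ultimately show ?thesis unfolding list_decodable_def by (metis not_less_eq_eq)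
qed

end
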